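(* Let $k$ be an algebraically closed field of characteristic $0$, let $K$ be a function field of dimension $2$ over $k$, and let $(R,\mathfrak m)$ be a $2$-dimensional regular local ring with fraction field $K$ and residue field $R/\mathfrak m\cong k$. Let $\nu$ be a non-divisorial valuation of $K$ (i.e. a valuation whose residue field has transcendence degree $0$ over $k$) centered on $R$, with value semigroup $S=\{\nu(x)\mid x\in\mathfrak m\setminus\{0\}\}$. Then for every $s\in S$, the length $l(s)=\dim_k\big(I_s/I_s^+\big)$ equals $1$, where $I_s=\{x\in R\mid \nu(x)\ge s\}$ and $I_s^+=\{x\in R\mid \nu(x)>s\}$.
   Context: A valuation $\nu$ of $K$ centered on $R$ has valuation ring $(V,\mathfrak m_V)$ with $R\subseteq V$, $\mathfrak m_V\cap R=\mathfrak m$. The divisorial valuations are those with rank $1$, rational rank $1$ and residue field $V/\mathfrak m_V$ of transcendence degree $1$ over $k$; by Abhyankar's inequality every other valuation centered on $R$ has residue field of transcendence degree $0$ over $k$, and these are called non-divisorial. The quotient $I_s/I_s^+$ is regarded as a vector space over $R/\mathfrak m\cong k$. *)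

theory Defs
  imports Main
begin

text \<open>Ambient field: a type 'a of class field_char_0 plays the role of the
function field K (so K = UNIV).  Subfields, subrings, ideals are sets.\<close>

definition subfield :: "'a::field set \<Rightarrow> bool" where
  "subfield F \<longleftrightarrow> 0 \<in> F \<and> 1 \<in> F \<and> (\<forall>x\<in>F. \<forall>y\<in>F. x + y \<in> F \<and> x * y \<in> F)
     \<and> (\<forall>x\<in>F. - x \<in> F \<and> inverse x \<in> F)"

definition subring :: "'a::field set \<Rightarrow> bool" where
  "subring R \<longleftrightarrow> 0 \<in> R \<and> 1 \<in> R \<and> (\<forall>x\<in>R. \<forall>y\<in>R. x + y \<in> R \<and> x * y \<in> R)
     \<and> (\<forall>x\<in>R. - x \<in> R)"

definition alg_closed_subfield :: "'a::field set \<Rightarrow> bool" where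
  "alg_closed_subfield k \<longleftrightarrow> subfield k \<and>
     (\<forall>n c. n \<ge> 1 \<and> (\<forall>i\<le>n. c i \<in> k) \<and> c n \<noteq> 0 \<longrightarrow>
        (\<exists>z\<in>k. (\<Sum>i\<le>n. c i * z ^ i) = 0))"

definition algebraic_over :: "'a::field set \<Rightarrow> 'a \<Rightarrow> bool" where
  "algebraic_over F z \<longleftrightarrow> (\<exists>n c. (\<forall>i\<le>n. c i \<in> F) \<and> c n \<noteq> 0 \<and> (\<Sum>i\<le>n. c i * z ^ i) = 0)"

definition alg_indep2 :: "'a::field set \<Rightarrow> 'a \<Rightarrow> 'a \<Rightarrow> bool" where
  "alg_indep2 k x y \<longleftrightarrow> (\<forall>n c. (\<forall>i<n. \<forall>j<n. c i j \<in> k) \<and>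
      (\<Sum>i<n. \<Sum>j<n. c i j * x ^ i * y ^ j) = 0 \<longrightarrow> (\<forall>i<n. \<forall>j<n. c i j = 0))"

definition gen_field :: "'a::field set \<Rightarrow> 'a set" where
  "gen_field S = \<Inter> {L. subfield L \<and> S \<subseteq> L}"

text \<open>K (= UNIV) is a function field of dimension 2 over k: finitely generated
field extension of k of transcendence degree 2 (i.e. with a transcendence basis
of two elements).\<close>
definition function_field_dim2 :: "'a::field set \<Rightarrow> bool" where
  "function_field_dim2 k \<longleftrightarrow> subfield k \<and>
     (\<exists>G. finite G \<and> gen_field (k \<union> G) = UNIV) \<and>
     (\<exists>x y. alg_indep2 k x y \<and> (\<forall>z. algebraic_over (gen_field (k \<union> {x, y})) z))"

definition ideal_in :: "'a::field set \<Rightarrow> 'a set \<Rightarrow> bool" where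
  "ideal_in R I \<longleftrightarrow> I \<subseteq> R \<and> 0 \<in> I \<and> (\<forall>x\<in>I. \<forall>y\<in>I. x + y \<in> I) \<and>
     (\<forall>r\<in>R. \<forall>x\<in>I. r * x \<in> I)"

definition prime_ideal_in :: "'a::field set \<Rightarrow> 'a set \<Rightarrow> bool" where
  "prime_ideal_in R P \<longleftrightarrow> ideal_in R P \<and> P \<noteq> R \<and>
     (\<forall>a\<in>R. \<forall>b\<in>R. a * b \<in> P \<longrightarrow> a \<in> P \<or> b \<in> P)"

definition ideal_gen :: "'a::field set \<Rightarrow> 'a set \<Rightarrow> 'a set" where
  "ideal_gen R G = {x. \<exists>r. (\<forall>g\<in>G. r g \<in> R) \<and> x = (\<Sum>g\<in>G. r g * g)}"

definition noetherian_ring :: "'a::field set \<Rightarrow> bool" where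
  "noetherian_ring R \<longleftrightarrow> (\<forall>I. ideal_in R I \<longrightarrow> (\<exists>G. finite G \<and> G \<subseteq> I \<and> I = ideal_gen R G))"

definition prime_chain :: "'a::field set \<Rightarrow> nat \<Rightarrow> (nat \<Rightarrow> 'a set) \<Rightarrow> bool" where
  "prime_chain R n P \<longleftrightarrow> (\<forall>i\<le>n. prime_ideal_in R (P i)) \<and> (\<forall>i<n. P i \<subset> P (Suc i))"

definition krull_dim_eq :: "'a::field set \<Rightarrow> nat \<Rightarrow> bool" where
  "krull_dim_eq R d \<longleftrightarrow> (\<exists>P. prime_chain R d P) \<and> (\<forall>n P. prime_chain R n P \<longrightarrow> n \<le> d)"

definition local_ring :: "'a::field set \<Rightarrow> 'a set \<Rightarrow> bool" where
  "local_ring R m \<longleftrightarrow> subring R \<and> ideal_in R m \<and> m \<noteq> R \<and>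
     (\<forall>x\<in>R - m. \<exists>y\<in>R. x * y = 1)"

definition regular_local_ring_dim2 :: "'a::field set \<Rightarrow> 'a set \<Rightarrow> bool" where
  "regular_local_ring_dim2 R m \<longleftrightarrow> local_ring R m \<and> noetherian_ring R \<and> krull_dim_eq R 2 \<and>
     (\<exists>a b. a \<in> m \<and> b \<in> m \<and> m = ideal_gen R {a, b})"

definition fraction_field_is_UNIV :: "'a::field set \<Rightarrow> bool" where
  "fraction_field_is_UNIV R \<longleftrightarrow> (\<forall>z. \<exists>a\<in>R. \<exists>b\<in>R. b \<noteq> 0 \<and> z = a / b)"

text \<open>Valuation on K with values in an ordered abelian group; the value at 0
(formally infinity) is irrelevant and never used.\<close>
definition valuation :: "('a::field \<Rightarrow> 'g::linordered_ab_group_add) \<Rightarrow> bool" where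
  "valuation \<nu> \<longleftrightarrow> (\<forall>x y. x \<noteq> 0 \<and> y \<noteq> 0 \<longrightarrow> \<nu> (x * y) = \<nu> x + \<nu> y) \<and>
     (\<forall>x y. x \<noteq> 0 \<and> y \<noteq> 0 \<and> x + y \<noteq> 0 \<longrightarrow> \<nu> (x + y) \<ge> min (\<nu> x) (\<nu> y))"

definition val_ring :: "('a::field \<Rightarrow> 'g::linordered_ab_group_add) \<Rightarrow> 'a set" where
  "val_ring \<nu> = {x. x = 0 \<or> \<nu> x \<ge> 0}"

definition val_max_ideal :: "('a::field \<Rightarrow> 'g::linordered_ab_group_add) \<Rightarrow> 'a set" where
  "val_max_ideal \<nu> = {x. x = 0 \<or> \<nu> x > 0}"

definition centered_on :: "('a::field \<Rightarrow> 'g::linordered_ab_group_add) \<Rightarrow> 'a set \<Rightarrow> 'a set \<Rightarrow> bool" where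
  "centered_on \<nu> R m \<longleftrightarrow> R \<subseteq> val_ring \<nu> \<and> val_max_ideal \<nu> \<inter> R = m"

text \<open>The residue field V/m_V has transcendence degree 0 over k, i.e. every
residue class is algebraic over (the image of) k.\<close>
definition residue_trdeg0 :: "('a::field \<Rightarrow> 'g::linordered_ab_group_add) \<Rightarrow> 'a set \<Rightarrow> bool" where
  "residue_trdeg0 \<nu> k \<longleftrightarrow> (\<forall>v\<in>val_ring \<nu>. \<exists>n c. (\<forall>i\<le>n. c i \<in> k) \<and> c n \<notin> val_max_ideal \<nu> \<and>
       (\<Sum>i\<le>n. c i * v ^ i) \<in> val_max_ideal \<nu>)"

definition value_semigroup :: "('a::field \<Rightarrow> 'g::linordered_ab_group_add) \<Rightarrow> 'a set \<Rightarrow> 'g set" where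
  "value_semigroup \<nu> m = {\<nu> x | x. x \<in> m \<and> x \<noteq> 0}"

definition I_ge :: "('a::field \<Rightarrow> 'g::linordered_ab_group_add) \<Rightarrow> 'a set \<Rightarrow> 'g \<Rightarrow> 'a set" where
  "I_ge \<nu> R s = {x\<in>R. x = 0 \<or> \<nu> x \<ge> s}"

definition I_gt :: "('a::field \<Rightarrow> 'g::linordered_ab_group_add) \<Rightarrow> 'a set \<Rightarrow> 'g \<Rightarrow> 'a set" where
  "I_gt \<nu> R s = {x\<in>R. x = 0 \<or> \<nu> x > s}"

text \<open>dim_k (A/B) = n for k-subspaces B \<subseteq> A: there is a list of n elements of A
whose classes form a k-basis of A/B.\<close>
definition quotient_dim_eq :: "'a::field set \<Rightarrow> 'a set \<Rightarrow> 'a set \<Rightarrow> nat \<Rightarrow> bool" where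
  "quotient_dim_eq k A B n \<longleftrightarrow> (\<exists>bs. length bs = n \<and> set bs \<subseteq> A \<and>
     (\<forall>c. (\<forall>i<n. c i \<in> k) \<and> (\<Sum>i<n. c i * bs ! i) \<in> B \<longrightarrow> (\<forall>i<n. c i = 0)) \<and>
     (\<forall>a\<in>A. \<exists>c. (\<forall>i<n. c i \<in> k) \<and> a - (\<Sum>i<n. c i * bs ! i) \<in> B))"

end

theory Submission
  imports Defs "HOL-Computational_Algebra.Polynomial"
begin

lemma polyk:
  assumes sk: "subfield k" and z: "z \<in> k"
  shows "(\<forall>i. coeff p i \<in> k) \<Longrightarrow> poly p z \<in> k"
proof (induction p rule: pCons_induct)
  case 0 then show ?case using sk by (simp add: subfield_def)
next
  case (pCons a p)
  have "\<forall>i. coeff p i \<in> k" using pCons.prems by (metis coeff_pCons_Suc)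
  hence "poly p z \<in> k" using pCons.IH by blast
  moreover have "a \<in> k" using pCons.prems by (metis coeff_pCons_0)
  ultimately show ?case using sk z by (simp add: subfield_def)
qed

lemma polyV:
  assumes Vadd: "\<And>x y. x\<in>V \<Longrightarrow> y\<in>V \<Longrightarrow> x+y\<in>V"
    and Vmul: "\<And>x y. x\<in>V \<Longrightarrow> y\<in>V \<Longrightarrow> x*y\<in>V"
    and kV: "k \<subseteq> V" and k0: "0 \<in> k" and v: "v \<in> V"
  shows "(\<forall>i. coeff p i \<in> k) \<Longrightarrow> poly p v \<in> V"
proof (induction p rule: pCons_induct)
  case 0 then show ?case using k0 kV by auto
next
  case (pCons a p)
  have "\<forall>i. coeff p i \<in> k" using pCons.prems by (metis coeff_pCons_Suc)
  hence "poly p v \<in> V" using pCons.IH by blast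
  moreover have "a \<in> V" using pCons.prems kV by (metis coeff_pCons_0 subsetD)
  ultimately show ?case using Vadd Vmul v by simp
qed

lemma synthk:
  assumes sk: "subfield k" and z: "z \<in> k"
  shows "(\<forall>i. coeff p i \<in> k) \<Longrightarrow> \<forall>i. coeff (synthetic_div p z) i \<in> k"
proof (induction p rule: pCons_induct)
  case 0 then show ?case using sk by (simp add: subfield_def)
next
  case (pCons a p)
  have h: "\<forall>i. coeff p i \<in> k" using pCons.prems by (metis coeff_pCons_Suc)
  hence "poly p z \<in> k" using polyk[OF sk z] by blast
  moreover have "\<forall>i. coeff (synthetic_div p z) i \<in> k" using pCons.IH h by blast
  ultimately show ?case
    by (simp add: synthetic_div_pCons coeff_pCons split: nat.split)
qed

lemma key:
  fixes k V M :: "'a::field set"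
  assumes ac: "alg_closed_subfield k"
    and Vadd: "\<And>x y. x\<in>V \<Longrightarrow> y\<in>V \<Longrightarrow> x+y\<in>V"
    and Vmul: "\<And>x y. x\<in>V \<Longrightarrow> y\<in>V \<Longrightarrow> x*y\<in>V"
    and kV: "k \<subseteq> V"
    and Vprod: "\<And>x y. x\<in>V \<Longrightarrow> y\<in>V \<Longrightarrow> x\<notin>M \<Longrightarrow> y\<notin>M \<Longrightarrow> x*y\<notin>M"
    and kM: "\<And>c. c\<in>k \<Longrightarrow> c\<noteq>0 \<Longrightarrow> c\<notin>M"
    and v: "v \<in> V"
  shows "(\<forall>i. coeff p i \<in> k) \<Longrightarrow> p \<noteq> 0 \<Longrightarrow> poly p v \<in> M \<Longrightarrow> \<exists>z\<in>k. v - z \<in> M"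
proof (induction "degree p" arbitrary: p rule: less_induct)
  case less
  have sk: "subfield k" using ac by (simp add: alg_closed_subfield_def)
  show ?case
  proof (cases "degree p = 0")
    case True
    then obtain c where p: "p = [:c:]" by (metis degree_eq_zeroE)
    have "c \<in> k" "c \<noteq> 0" using less.prems p by (metis coeff_pCons_0, simp)
    then show ?thesis using kM less.prems p by simp
  next
    case False
    have "\<exists>z\<in>k. (\<Sum>i\<le>degree p. coeff p i * z ^ i) = 0"
      using ac False less.prems unfolding alg_closed_subfield_def by auto
    then obtain z where z: "z \<in> k" "poly p z = 0" by (auto simp: poly_altdef)
    define q where "q = synthetic_div p z"
    have pq: "p = [:-z,1:] * q"
      using synthetic_div_correct'[of z p] z(2) unfolding q_def by simp
    have qk: "\<forall>i. coeff q i \<in> k" using synthk[OF sk z(1)] less.prems q_def by blast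
    have q0: "q \<noteq> 0" using pq less.prems by auto
    have dq: "degree q < degree p" using False q_def degree_synthetic_div[of p z] by simp
    have ev: "poly p v = (v - z) * poly q v"
      by (subst pq) (simp add: algebra_simps)
    have mz: "-z \<in> k" using sk z by (simp add: subfield_def)
    have vz: "v - z \<in> V" using Vadd[OF v] mz kV by (metis diff_conv_add_uminus subsetD)
    have qv: "poly q v \<in> V" using polyV[OF Vadd Vmul kV _ v] qk sk by (simp add: subfield_def)
    show ?thesis
    proof (cases "v - z \<in> M")
      case True then show ?thesis using z by blast
    next
      case F: False
      hence "poly q v \<in> M" using Vprod[OF vz qv] ev less.prems by metis
      then show ?thesis using less.hyps[OF dq qk q0] by blast
    qed
  qed
qed

theorem mainTheorem1:
  fixes k R m :: "'a::field_char_0 set"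
    and \<nu> :: "'a \<Rightarrow> 'g::linordered_ab_group_add"
    and s :: 'g
  assumes k_alg_closed: "alg_closed_subfield k"
    and K_function_field: "function_field_dim2 k"
    and R_regular: "regular_local_ring_dim2 R m"
    and R_frac: "fraction_field_is_UNIV R"
    and k_in_R: "k \<subseteq> R"
    and residue_k: "\<forall>x\<in>R. \<exists>c\<in>k. x - c \<in> m"
    and nu_val: "valuation \<nu>"
    and nu_centered: "centered_on \<nu> R m"
    and nu_nondivisorial: "residue_trdeg0 \<nu> k"
    and s_in_S: "s \<in> value_semigroup \<nu> m"
  shows "quotient_dim_eq k (I_ge \<nu> R s) (I_gt \<nu> R s) 1"
proof -
  have sk: "subfield k" using k_alg_closed by (simp add: alg_closed_subfield_def)
  have mult: "\<And>x y. x \<noteq> 0 \<Longrightarrow> y \<noteq> 0 \<Longrightarrow> \<nu> (x*y) = \<nu> x + \<nu> y"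
    using nu_val by (simp add: valuation_def)
  have addv: "\<And>x y. x \<noteq> 0 \<Longrightarrow> y \<noteq> 0 \<Longrightarrow> x + y \<noteq> 0 \<Longrightarrow> \<nu> (x+y) \<ge> min (\<nu> x) (\<nu> y)"
    using nu_val by (simp add: valuation_def)
  have RV: "R \<subseteq> val_ring \<nu>" and mR: "val_max_ideal \<nu> \<inter> R = m"
    using nu_centered by (auto simp: centered_on_def)
  have subR: "subring R" and mid: "ideal_in R m" using R_regular
    by (auto simp: regular_local_ring_dim2_def local_ring_def)
  have mRR: "m \<subseteq> R" using mid by (simp add: ideal_in_def)
  obtain x where x: "x \<in> m" "x \<noteq> 0" "\<nu> x = s" using s_in_S by (auto simp: value_semigroup_def)
  have xR: "x \<in> R" using x mRR by auto
  have k0: "\<And>c. c \<in> k \<Longrightarrow> c \<noteq> 0 \<Longrightarrow> \<nu> c = 0"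
  proof -
    fix c assume c: "c \<in> k" "c \<noteq> 0"
    have ic: "inverse c \<in> k" using sk c by (simp add: subfield_def)
    have "\<nu> c \<ge> 0" using c k_in_R RV by (auto simp: val_ring_def)
    moreover have "\<nu> (inverse c) \<ge> 0" using ic c k_in_R RV by (auto simp: val_ring_def)
    moreover have "\<nu> 1 = 0"
    proof -
      have "\<nu> 1 = \<nu> 1 + \<nu> 1" using mult[of 1 1] by simp
      thus ?thesis by simp
    qed
    moreover have "\<nu> (c * inverse c) = \<nu> c + \<nu> (inverse c)" using mult[of c "inverse c"] c by simp
    moreover have "c * inverse c = 1" using c by simp
    ultimately have "\<nu> c + \<nu> (inverse c) = 0" by simp
    thus "\<nu> c = 0" using \<open>\<nu> c \<ge> 0\<close> \<open>\<nu> (inverse c) \<ge> 0\<close> by (simp add: add_nonneg_eq_0_iff)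
  qed
  define V where "V = val_ring \<nu>"
  define M where "M = val_max_ideal \<nu>"
  have Vadd: "\<And>x y. x\<in>V \<Longrightarrow> y\<in>V \<Longrightarrow> x+y\<in>V"
  proof -
    fix a b assume ab: "a \<in> V" "b \<in> V"
    show "a + b \<in> V"
    proof (cases "a = 0 \<or> b = 0 \<or> a + b = 0")
      case True then show ?thesis using ab by (auto simp: V_def val_ring_def)
    next
      case False
      then show ?thesis using addv[of a b] ab by (auto simp: V_def val_ring_def min_def split: if_splits)
    qed
  qed
  have Vmul: "\<And>x y. x\<in>V \<Longrightarrow> y\<in>V \<Longrightarrow> x*y\<in>V"
  proof -
    fix a b assume ab: "a \<in> V" "b \<in> V"
    show "a * b \<in> V"
    proof (cases "a = 0 \<or> b = 0")
      case True then show ?thesis by (auto simp: V_def val_ring_def)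
    next
      case False
      hence "\<nu> (a*b) = \<nu> a + \<nu> b" using mult by blast
      moreover have "\<nu> a \<ge> 0" "\<nu> b \<ge> 0" using ab False by (auto simp: V_def val_ring_def)
      ultimately have "\<nu> (a*b) \<ge> 0" by simp
      then show ?thesis by (simp add: V_def val_ring_def)
    qed
  qed
  have kV: "k \<subseteq> V" using k_in_R RV V_def by auto
  have Vprod: "\<And>x y. x\<in>V \<Longrightarrow> y\<in>V \<Longrightarrow> x\<notin>M \<Longrightarrow> y\<notin>M \<Longrightarrow> x*y\<notin>M"
  proof -
    fix a b assume ab: "a \<in> V" "b \<in> V" "a \<notin> M" "b \<notin> M"
    hence "a \<noteq> 0" "b \<noteq> 0" "\<nu> a = 0" "\<nu> b = 0"
      by (auto simp: V_def M_def val_ring_def val_max_ideal_def)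
    hence "a * b \<noteq> 0" "\<nu> (a * b) = 0" using mult[of a b] by simp_all
    thus "a * b \<notin> M" by (simp add: M_def val_max_ideal_def)
  qed
  have kM: "\<And>c. c\<in>k \<Longrightarrow> c\<noteq>0 \<Longrightarrow> c\<notin>M" using k0 by (auto simp: M_def val_max_ideal_def)
  show ?thesis unfolding quotient_dim_eq_def
  proof (intro exI[of _ "[x]"] conjI allI impI ballI)
    show "length [x] = 1" by simp
    show "set [x] \<subseteq> I_ge \<nu> R s" using xR x by (simp add: I_ge_def)
  next
    fix c :: "nat \<Rightarrow> 'a" and i :: nat
    assume h: "(\<forall>i<1. c i \<in> k) \<and> (\<Sum>i<1. c i * [x] ! i) \<in> I_gt \<nu> R s" and i: "i < 1"
    have c0: "c 0 \<in> k" "c 0 * x \<in> I_gt \<nu> R s" using h by auto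
    show "c i = 0"
    proof (rule ccontr)
      assume "c i \<noteq> 0"
      hence "c 0 \<noteq> 0" using i by simp
      hence "c 0 * x \<noteq> 0" "\<nu> (c 0 * x) = s" using mult[of "c 0" x] k0[OF c0(1)] x by auto
      thus False using c0(2) by (simp add: I_gt_def)
    qed
  next
    fix a assume a: "a \<in> I_ge \<nu> R s"
    have aR: "a \<in> R" using a by (simp add: I_ge_def)
    show "\<exists>c. (\<forall>i<1. c i \<in> k) \<and> a - (\<Sum>i<1. c i * [x] ! i) \<in> I_gt \<nu> R s"
    proof (cases "a = 0 \<or> \<nu> a > s")
      case True
      have "(0::'a) \<in> k" using sk by (simp add: subfield_def)
      then show ?thesis using True aR by (intro exI[of _ "\<lambda>_. 0"]) (auto simp: I_gt_def)
    next
      case False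
      hence a0: "a \<noteq> 0" and as: "\<nu> a = s" using a by (auto simp: I_ge_def)
      define v where "v = a / x"
      have v0: "v \<noteq> 0" using a0 x by (simp add: v_def)
      have "\<nu> a = \<nu> v + \<nu> x" using mult[OF v0 x(2)] x(2) by (simp add: v_def)
      hence nv: "\<nu> v = 0" using as x by simp
      have vV: "v \<in> V" using nv by (simp add: V_def val_ring_def)
      obtain n c where nc: "\<forall>i\<le>n. c i \<in> k" "c n \<notin> M" "(\<Sum>i\<le>n. c i * v ^ i) \<in> M"
        using nu_nondivisorial vV unfolding residue_trdeg0_def V_def M_def by blast
      define p where "p = (\<Sum>i\<le>n. monom (c i) i)"
      have cp: "coeff p j = (if j \<le> n then c j else 0)" for j
        unfolding p_def by (simp add: coeff_sum coeff_monom)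
      have "(0::'a) \<in> k" using sk by (simp add: subfield_def)
      hence pk: "\<forall>i. coeff p i \<in> k" using nc(1) cp by auto
      have "c n \<noteq> 0" using nc(2) by (auto simp: M_def val_max_ideal_def)
      hence p0: "p \<noteq> 0" using cp[of n] by auto
      have "poly p v = (\<Sum>i\<le>n. c i * v ^ i)" unfolding p_def by (simp add: poly_sum poly_monom)
      hence "poly p v \<in> M" using nc(3) by simp
      then obtain z where z: "z \<in> k" "v - z \<in> M"
        using key[OF k_alg_closed Vadd Vmul kV Vprod kM vV pk p0] by blast
      have eq: "a - z * x = x * (v - z)" using x(2) by (simp add: v_def algebra_simps)
      have zR: "z \<in> R" using z k_in_R by auto
      have "- (z * x) \<in> R" using subR zR xR by (simp add: subring_def)
      hence "a + - (z * x) \<in> R" using subR aR unfolding subring_def by blast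
      hence inR: "a - z * x \<in> R" by simp
      have "a - z * x = 0 \<or> \<nu> (a - z * x) > s"
      proof (cases "v - z = 0")
        case True then show ?thesis using eq by simp
      next
        case False
        hence "\<nu> (v - z) > 0" using z(2) by (simp add: M_def val_max_ideal_def)
        thus ?thesis using eq mult[OF x(2) False] x(3) by simp
      qed
      then show ?thesis using z inR by (intro exI[of _ "\<lambda>_. z"]) (auto simp: I_gt_def)
    qed
  qed
qed

end
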